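(* Let $f$ be a loopless $(k,n)$-bounded affine permutation and let $\theta\in\Theta^{>0}_f$ be $f$-nondegenerate. Define $\gamma:\mathbb R\to\mathbb R^n$ by $\gamma_r(t)=\epsilon_r\prod_{p\in J_r}\sin(t-\theta_p)$, $r\in[n]$. Then for any $0\le s_1<s_2<\dots<s_k<\pi$, the vectors $\gamma(s_1),\dots,\gamma(s_k)$ form a basis of $\mathrm{Span}_{\mathbb R}\{\gamma(t):t\in\mathbb R\}$ (which is $k$-dimensional).
   Context: A $(k,n)$-bounded affine permutation is a bijection $f:\mathbb Z\to\mathbb Z$ with $f(j+n)=f(j)+n$, $j\le f(j)\le j+n$, $\sum_{j=1}^n(f(j)-j)=kn$; loopless if $f(p)>p$; $\bar f\in S_n$ given by $\bar f(p)\equiv f(p)$ mod $n$. For $r\in[n]$: $I_r=\{f(p)\bmod n: p\in\mathbb Z,\ p<r\le f(p)\}$, $J_r=I_r\setminus\{r\}$, $\epsilon_r=(-1)^{\#\{p\in[n]:\bar f(p)\le p<r\}}$. Strand diagram: $b_1,\dots,b_n$ clockwise on a circle, $p^-$ just before and $p^+$ just after $b_p$; straight arrows $S_p:s^+\to p^-$ with $s=\bar f^{-1}(p)$; distinct $p,q$ form an $f$-crossing if $S_p,S_q$ intersect; $G^\times_f$ is the graph on $[n]$ whose edges are the $f$-crossing pairs. $\theta\in\mathbb R^n$ is $f$-admissible if $\theta_p<\theta_q<\theta_p+\pi$ for all $f$-crossing pairs $p<q$. Fix representatives $p_1,\dots,p_c$, one in each connected component of $G^\times_f$; $\Theta^{>0}_f=\{\theta\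 f\text{-admissible}:\theta_{p_1}=\dots=\theta_{p_c}=0\}$. For distinct $p,q$ with $s=\bar f^{-1}(p)$, $t=\bar f^{-1}(q)$, $\{p,q\}\in\mathrm{Mis}^{\downarrow\uparrow}_f$ if $s^+,p^-,t^+,q^-$ are in counterclockwise order; $\theta$ is $f$-nondegenerate if $\theta_p\not\equiv\theta_q\pmod\pi$ for all $\{p,q\}\in\mathrm{Mis}^{\downarrow\uparrow}_f$. *)

theory Defs
  imports "HOL-Analysis.Analysis" "HOL-Library.Function_Algebras"
begin

definition bounded_affine_perm :: "nat \<Rightarrow> nat \<Rightarrow> (int \<Rightarrow> int) \<Rightarrow> bool" where
  "bounded_affine_perm k n f \<longleftrightarrow>
     bij f \<and> (\<forall>j. f (j + int n) = f j + int n) \<and> (\<forall>j. j \<le> f j \<and> f j \<le> j + int n) \<and>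
     (\<Sum>j\<in>{1..int n}. f j - j) = int k * int n"

definition loopless :: "(int \<Rightarrow> int) \<Rightarrow> bool" where
  "loopless f \<longleftrightarrow> (\<forall>p. f p > p)"

definition modn :: "nat \<Rightarrow> int \<Rightarrow> int" where
  "modn n x = (x - 1) mod int n + 1"

definition fbar :: "nat \<Rightarrow> (int \<Rightarrow> int) \<Rightarrow> int \<Rightarrow> int" where
  "fbar n f p = modn n (f p)"

definition fbar_inv :: "nat \<Rightarrow> (int \<Rightarrow> int) \<Rightarrow> int \<Rightarrow> int" where
  "fbar_inv n f p = (THE s. s \<in> {1..int n} \<and> fbar n f s = p)"

definition I_set :: "nat \<Rightarrow> (int \<Rightarrow> int) \<Rightarrow> int \<Rightarrow> int set" where
  "I_set n f r = {modn n (f p) | p. p < r \<and> r \<le> f p}"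

definition J_set :: "nat \<Rightarrow> (int \<Rightarrow> int) \<Rightarrow> int \<Rightarrow> int set" where
  "J_set n f r = I_set n f r - {r}"

definition eps_sign :: "nat \<Rightarrow> (int \<Rightarrow> int) \<Rightarrow> int \<Rightarrow> real" where
  "eps_sign n f r = (-1) ^ card {p \<in> {1..int n}. fbar n f p \<le> p \<and> p < r}"

text \<open>Clockwise positions on the circle: the points are, in clockwise order,
  1^-, b_1, 1^+, 2^-, b_2, 2^+, ..., n^-, b_n, n^+. We encode p^- by 3p-1,
  b_p by 3p and p^+ by 3p+1; cyclic (clockwise) order is increasing order up to rotation.\<close>
definition pos_minus :: "int \<Rightarrow> int" where "pos_minus p = 3 * p - 1"
definition pos_plus :: "int \<Rightarrow> int" where "pos_plus p = 3 * p + 1"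

text \<open>Two straight chords with pairwise distinct endpoints (a,b), (c,d) intersect iff the
  endpoints interleave on the circle.\<close>
definition strictly_between :: "int \<Rightarrow> int \<Rightarrow> int \<Rightarrow> bool" where
  "strictly_between a b x \<longleftrightarrow> min a b < x \<and> x < max a b"

definition chords_cross :: "int \<Rightarrow> int \<Rightarrow> int \<Rightarrow> int \<Rightarrow> bool" where
  "chords_cross a b c d \<longleftrightarrow> (strictly_between a b c \<noteq> strictly_between a b d)"

text \<open>The arrow S_p goes from s^+ to p^-, s = fbar^{-1}(p).\<close>
definition f_crossing :: "nat \<Rightarrow> (int \<Rightarrow> int) \<Rightarrow> int \<Rightarrow> int \<Rightarrow> bool" where
  "f_crossing n f p q \<longleftrightarrow> p \<in> {1..int n} \<and> q \<in> {1..int n} \<and> p \<noteq> q \<and>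
     chords_cross (pos_plus (fbar_inv n f p)) (pos_minus p)
                  (pos_plus (fbar_inv n f q)) (pos_minus q)"

definition crossing_connected :: "nat \<Rightarrow> (int \<Rightarrow> int) \<Rightarrow> int \<Rightarrow> int \<Rightarrow> bool" where
  "crossing_connected n f p q \<longleftrightarrow> (f_crossing n f)\<^sup>*\<^sup>* p q"

definition component_reps :: "nat \<Rightarrow> (int \<Rightarrow> int) \<Rightarrow> int set \<Rightarrow> bool" where
  "component_reps n f R \<longleftrightarrow> R \<subseteq> {1..int n} \<and>
     (\<forall>p\<in>{1..int n}. \<exists>!r. r \<in> R \<and> crossing_connected n f p r)"

definition f_admissible :: "nat \<Rightarrow> (int \<Rightarrow> int) \<Rightarrow> (int \<Rightarrow> real) \<Rightarrow> bool" where
  "f_admissible n f \<theta> \<longleftrightarrow>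
     (\<forall>p q. f_crossing n f p q \<and> p < q \<longrightarrow> \<theta> p < \<theta> q \<and> \<theta> q < \<theta> p + pi)"

definition Theta_pos :: "nat \<Rightarrow> (int \<Rightarrow> int) \<Rightarrow> int set \<Rightarrow> (int \<Rightarrow> real) set" where
  "Theta_pos n f R = {\<theta>. f_admissible n f \<theta> \<and> (\<forall>r\<in>R. \<theta> r = 0)}"

definition cw_order :: "int \<Rightarrow> int \<Rightarrow> int \<Rightarrow> int \<Rightarrow> bool" where
  "cw_order a b c d \<longleftrightarrow>
     (a < b \<and> b < c \<and> c < d) \<or> (b < c \<and> c < d \<and> d < a) \<or>
     (c < d \<and> d < a \<and> a < b) \<or> (d < a \<and> a < b \<and> b < c)"

definition ccw_order :: "int \<Rightarrow> int \<Rightarrow> int \<Rightarrow> int \<Rightarrow> bool" where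
  "ccw_order a b c d \<longleftrightarrow> cw_order d c b a"

definition Mis_du :: "nat \<Rightarrow> (int \<Rightarrow> int) \<Rightarrow> int \<Rightarrow> int \<Rightarrow> bool" where
  "Mis_du n f p q \<longleftrightarrow> p \<in> {1..int n} \<and> q \<in> {1..int n} \<and> p \<noteq> q \<and>
     ccw_order (pos_plus (fbar_inv n f p)) (pos_minus p)
               (pos_plus (fbar_inv n f q)) (pos_minus q)"

definition f_nondegenerate :: "nat \<Rightarrow> (int \<Rightarrow> int) \<Rightarrow> (int \<Rightarrow> real) \<Rightarrow> bool" where
  "f_nondegenerate n f \<theta> \<longleftrightarrow>
     (\<forall>p q. Mis_du n f p q \<longrightarrow> \<not> (\<exists>m::int. \<theta> p - \<theta> q = of_int m * pi))"

text \<open>Vectors of R^n are represented as functions int => real, supported on [n] = {1..n}.\<close>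
definition vscale :: "real \<Rightarrow> (int \<Rightarrow> real) \<Rightarrow> (int \<Rightarrow> real)" where
  "vscale c v = (\<lambda>i. c * v i)"

definition gamma :: "nat \<Rightarrow> (int \<Rightarrow> int) \<Rightarrow> (int \<Rightarrow> real) \<Rightarrow> real \<Rightarrow> (int \<Rightarrow> real)" where
  "gamma n f \<theta> t = (\<lambda>r. if r \<in> {1..int n}
       then eps_sign n f r * (\<Prod>p\<in>J_set n f r. sin (t - \<theta> p)) else 0)"

end

theory Submission
  imports Defs
begin


locale bap =
  fixes k n :: nat and f :: "int \<Rightarrow> int"
  assumes n1: "n \<ge> 1" and bap: "bounded_affine_perm k n f" and ll: "loopless f"
begin

lemma per: "f (j + int n) = f j + int n" using bap unfolding bounded_affine_perm_def by auto
lemma bnd: "j < f j" "f j \<le> j + int n" using bap ll unfolding bounded_affine_perm_def loopless_def by auto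
lemma bijf: "bij f" using bap unfolding bounded_affine_perm_def by auto
lemma injf: "f x = f y \<Longrightarrow> x = y" using bijf by (meson bij_betw_imp_inj_on injD)
lemma sumk: "(\<Sum>j\<in>{1..int n}. f j - j) = int k * int n" using bap unfolding bounded_affine_perm_def by auto

lemma perl: "f (j + l * int n) = f j + l * int n"
proof (induction l rule: int_induct[where k=0])
  case base then show ?case by simp
next
  case (step1 i)
  have "f (j + (i+1) * int n) = f ((j + i * int n) + int n)" by (simp add: algebra_simps)
  also have "\<dots> = f (j + i * int n) + int n" by (rule per)
  finally show ?case using step1 by (simp add: algebra_simps)
next
  case (step2 i)
  have "f (j + i * int n) = f ((j + (i - 1) * int n) + int n)" by (simp add: algebra_simps)
  also have "\<dots> = f (j + (i - 1) * int n) + int n" by (rule per)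
  finally show ?case using step2 by (simp add: algebra_simps)
qed

lemma modn_range: "modn n x \<in> {1..int n}"
proof -
  have "(x - 1) mod int n < int n" "0 \<le> (x - 1) mod int n" using n1 by auto
  then show ?thesis unfolding modn_def by auto
qed
lemma modn_id: "x \<in> {1..int n} \<Longrightarrow> modn n x = x"
  unfolding modn_def by (auto simp: mod_pos_pos_trivial)
lemma modn_eq: "\<exists>l. x = modn n x + l * int n"
proof -
  have "(x - 1) div int n * int n + (x - 1) mod int n = x - 1" by (rule div_mult_mod_eq)
  then have "x = modn n x + ((x - 1) div int n) * int n" unfolding modn_def by linarith
  then show ?thesis by blast
qed
lemma modn_plus: "modn n (x + l * int n) = modn n x"
proof -
  have "(x + l * int n - 1) mod int n = ((x - 1) + l * int n) mod int n" by (simp add: algebra_simps)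
  also have "\<dots> = (x - 1) mod int n" by simp
  finally show ?thesis unfolding modn_def by simp
qed

lemma fbar_inj: assumes "x \<in> {1..int n}" "y \<in> {1..int n}" "fbar n f x = fbar n f y" shows "x = y"
proof -
  obtain l1 where l1: "f x = modn n (f x) + l1 * int n" using modn_eq by blast
  obtain l2 where l2: "f y = modn n (f y) + l2 * int n" using modn_eq by blast
  have "f x = f (y + (l1 - l2) * int n)" using l1 l2 assms(3) perl[of y "l1-l2"]
    unfolding fbar_def by (simp add: algebra_simps)
  then have xy: "x = y + (l1 - l2) * int n" using injf by blast
  show ?thesis
  proof (cases "l1 - l2 = 0")
    case False
    then have "\<bar>(l1 - l2) * int n\<bar> \<ge> int n" using n1
      by (simp add: abs_mult mult_le_cancel_right1)
    moreover have "\<bar>x - y\<bar> < int n" using assms(1,2) by auto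
    moreover have "x - y = (l1 - l2) * int n" using xy by simp
    ultimately show ?thesis by linarith
  qed (use xy in auto)
qed

lemma fbar_range: "fbar n f x \<in> {1..int n}" unfolding fbar_def using modn_range by auto

lemma fbar_surj: assumes "u \<in> {1..int n}" shows "\<exists>a\<in>{1..int n}. fbar n f a = u"
proof -
  obtain p where p: "f p = u" using bijf by (metis bij_pointE)
  obtain l where l: "p = modn n p + l * int n" using modn_eq by blast
  have "f (modn n p) = u - l * int n" using perl[of "modn n p" l] l p by simp
  then have "fbar n f (modn n p) = modn n (u + (-l) * int n)" unfolding fbar_def by simp
  then have "fbar n f (modn n p) = u" using modn_plus[of "u" "-l"] modn_id[OF assms] by simp
  then show ?thesis using modn_range by blast
qed

lemma fbar_inv: assumes "u \<in> {1..int n}"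
  shows "fbar_inv n f u \<in> {1..int n}" "fbar n f (fbar_inv n f u) = u"
proof -
  obtain a where a: "a \<in> {1..int n}" "fbar n f a = u" using fbar_surj assms by blast
  have "(THE s. s \<in> {1..int n} \<and> fbar n f s = u) = a"
    apply (rule the_equality) using a fbar_inj by auto
  then show "fbar_inv n f u \<in> {1..int n}" "fbar n f (fbar_inv n f u) = u"
    unfolding fbar_inv_def using a by auto
qed

lemma fbar_inv_eq: assumes "a \<in> {1..int n}" shows "fbar_inv n f (fbar n f a) = a"
proof -
  have "fbar_inv n f (fbar n f a) \<in> {1..int n}" "fbar n f (fbar_inv n f (fbar n f a)) = fbar n f a"
    using fbar_inv[OF fbar_range[of a]] by auto
  then show ?thesis using fbar_inj[OF _ assms] by blast
qed

end


definition IC :: "int \<Rightarrow> int \<Rightarrow> int \<Rightarrow> bool" where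
  "IC a u r \<longleftrightarrow> (if a < u then a < r \<and> r \<le> u else a < r \<or> r \<le> u)"

context bap begin

lemma modn_small: assumes "1 \<le> F" "F \<le> 2 * int n" shows "modn n F = (if F \<le> int n then F else F - int n)"
proof (cases "F \<le> int n")
  case True then show ?thesis using modn_id assms by auto
next
  case False
  have "modn n ((F - int n) + 1 * int n) = modn n (F - int n)" by (rule modn_plus)
  moreover have "modn n (F - int n) = F - int n" using modn_id False assms by auto
  ultimately show ?thesis using False by simp
qed

lemma fa_facts: assumes "u \<in> {1..int n}"
  shows "fbar_inv n f u \<in> {1..int n}" "fbar_inv n f u < f (fbar_inv n f u)"
    "f (fbar_inv n f u) \<le> fbar_inv n f u + int n"
    "u = (if f (fbar_inv n f u) \<le> int n then f (fbar_inv n f u) else f (fbar_inv n f u) - int n)"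
proof -
  let ?a = "fbar_inv n f u"
  show a: "?a \<in> {1..int n}" using fbar_inv assms by auto
  show "?a < f ?a" "f ?a \<le> ?a + int n" using bnd by auto
  then have "modn n (f ?a) = (if f ?a \<le> int n then f ?a else f ?a - int n)" using a
    by (intro modn_small) auto
  then show "u = (if f ?a \<le> int n then f ?a else f ?a - int n)"
    using fbar_inv(2)[OF assms] unfolding fbar_def by simp
qed

lemma I_sub: "I_set n f r \<subseteq> {1..int n}" unfolding I_set_def using modn_range by auto

lemma I_char: assumes u: "u \<in> {1..int n}" and r: "r \<in> {1..int n}"
  shows "u \<in> I_set n f r \<longleftrightarrow> IC (fbar_inv n f u) u r"
proof -
  define a where "a = fbar_inv n f u"
  define F where "F = f a"
  have a: "a \<in> {1..int n}" "a < F" "F \<le> a + int n" "u = (if F \<le> int n then F else F - int n)"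
    using fa_facts[OF u] unfolding a_def F_def by auto
  have fa: "fbar n f a = u" using fbar_inv[OF u] a_def by simp
  have ar: "1 \<le> a" "a \<le> int n" "1 \<le> r" "r \<le> int n" using a r by auto
  show ?thesis
  proof
    assume "u \<in> I_set n f r"
    then obtain p where p: "p < r" "r \<le> f p" "modn n (f p) = u" unfolding I_set_def by auto
    obtain l where l: "p = modn n p + l * int n" using modn_eq by blast
    have fp: "f p = f (modn n p) + l * int n" using perl[of "modn n p" l] l by simp
    have "fbar n f (modn n p) = u" using p(3) fp modn_plus unfolding fbar_def by metis
    then have "modn n p = a" using fbar_inj[OF modn_range a(1)] fa by simp
    then have pl: "p = a + l * int n" "f p = F + l * int n" using l fp F_def by auto
    have "l \<noteq> 1 + m" if "m \<ge> 0" for m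
    proof
      assume "l = 1 + m"
      then have "l * int n = int n + m * int n" by (simp add: algebra_simps)
      moreover have "m * int n \<ge> 0" using that by simp
      ultimately show False using pl p a(2,3) ar by linarith
    qed
    then have l1: "l \<le> 0" by (metis add.commute diff_add_cancel le_less_linear zle_diff1_eq)
    have "l \<noteq> -2 - m" if "m \<ge> 0" for m
    proof
      assume "l = -2 - m"
      then have "l * int n = (- 2 - m) * int n" by simp
      then have "l * int n = - 2 * int n - m * int n" by (simp add: algebra_simps)
      moreover have "m * int n \<ge> 0" using that by simp
      ultimately show False using pl p a(2,3) ar by linarith
    qed
    then have l2: "l \<ge> -1" by (smt (verit))
    have "l = 0 \<or> l = -1" using l1 l2 by auto
    then show "IC (fbar_inv n f u) u r" unfolding IC_def a_def[symmetric]
      using pl p a r by (auto split: if_splits)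
  next
    assume ic: "IC (fbar_inv n f u) u r"
    show "u \<in> I_set n f r"
    proof (cases "F \<le> int n")
      case True
      then have "a < r \<and> r \<le> F" using ic a unfolding IC_def a_def[symmetric] by (auto split: if_splits)
      then show ?thesis unfolding I_set_def using fa unfolding fbar_def F_def by auto
    next
      case False
      then have "a < r \<or> r \<le> F - int n" using ic a unfolding IC_def a_def[symmetric] by (auto split: if_splits)
      then show ?thesis
      proof
        assume "a < r" then show ?thesis unfolding I_set_def using fa False r unfolding fbar_def F_def by auto
      next
        assume h: "r \<le> F - int n"
        have "f (a + (-1) * int n) = F - int n" using perl[of a "-1"] F_def by simp
        moreover have "modn n (F - int n) = u" using fa modn_plus[of F "-1"] unfolding fbar_def F_def by simp
        moreover have "a + (-1) * int n < r" using a r by simp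
        ultimately show ?thesis unfolding I_set_def using h by force
      qed
    qed
  qed
qed

end


definition JC :: "int \<Rightarrow> int \<Rightarrow> int \<Rightarrow> bool" where
  "JC a u r \<longleftrightarrow> r \<noteq> u \<and> IC a u r"

lemma N2: assumes "a \<in> {1..n}" "u \<in> {1..n}" "r \<in> {1..n}" "JC a u r"
   "\<not> JC a u (if r < n then r + 1 else 1)"
  shows "u = (if r < n then r + 1 else 1)"
  using assms unfolding JC_def IC_def by (auto split: if_splits)

lemma N3: assumes "a \<in> {1..n}" "u \<in> {1..n}" "r \<in> {1..n}" "\<not> JC a u r"
   "JC a u (if r < n then r + 1 else 1)"
  shows "a = r"
  using assms unfolding JC_def IC_def by (auto split: if_splits)

lemma JC_step: assumes "a \<in> {1..n}" "u \<in> {1..n}" "r \<in> {1..n}" "r < n"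
  shows "JC a u (r+1) \<longleftrightarrow> ((a = r \<or> JC a u r) \<and> u \<noteq> r + 1)"
  using assms unfolding JC_def IC_def by (auto split: if_splits)

lemma JC_self: "JC a u a \<Longrightarrow> False"
  unfolding JC_def IC_def by (auto split: if_splits)

context bap begin

lemma J_char: assumes r: "r \<in> {1..int n}"
  shows "J_set n f r = {u \<in> {1..int n}. JC (fbar_inv n f u) u r}"
proof (rule set_eqI)
  fix u show "u \<in> J_set n f r \<longleftrightarrow> u \<in> {u \<in> {1..int n}. JC (fbar_inv n f u) u r}"
  proof (cases "u \<in> {1..int n}")
    case True then show ?thesis using I_char[OF True r] unfolding J_set_def JC_def by auto
  next
    case False then show ?thesis using I_sub[of r] unfolding J_set_def by auto
  qed
qed

lemma finJ: "finite (J_set n f r)" using I_sub unfolding J_set_def by (meson finite_Diff finite_atLeastAtMost_int finite_subset)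

lemma fbar_bij: "bij_betw (fbar n f) {1..int n} {1..int n}"
proof -
  have "inj_on (fbar n f) {1..int n}" using fbar_inj by (meson inj_onI)
  moreover have "fbar n f ` {1..int n} = {1..int n}" using fbar_range fbar_surj by blast
  ultimately show ?thesis unfolding bij_betw_def by auto
qed

lemma card_big: "card {a \<in> {1..int n}. f a > int n} = k"
proof -
  have eq: "f a - a = (fbar n f a - a) + (if f a > int n then int n else 0)" if "a \<in> {1..int n}" for a
  proof -
    have "modn n (f a) = (if f a \<le> int n then f a else f a - int n)"
      using bnd[of a] that by (intro modn_small) auto
    then show ?thesis unfolding fbar_def by auto
  qed
  have s1: "(\<Sum>a\<in>{1..int n}. fbar n f a) = (\<Sum>a\<in>{1..int n}. a)"
    using sum.reindex_bij_betw[OF fbar_bij, of "\<lambda>x. x"] by simp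
  have "(\<Sum>a\<in>{1..int n}. f a - a) = (\<Sum>a\<in>{1..int n}. (fbar n f a - a) + (if f a > int n then int n else 0))"
    by (rule sum.cong) (use eq in auto)
  also have "\<dots> = (\<Sum>a\<in>{1..int n}. (fbar n f a - a)) + (\<Sum>a\<in>{1..int n}. (if f a > int n then int n else 0))"
    by (rule sum.distrib)
  also have "(\<Sum>a\<in>{1..int n}. (fbar n f a - a)) = 0" using s1 by (simp add: sum_subtractf)
  also have "(\<Sum>a\<in>{1..int n}. (if f a > int n then int n else 0)) = int n * int (card ({1..int n} \<inter> {a. f a > int n}))"
    by (simp add: sum.If_cases)
  finally have "int k * int n = int n * int (card ({1..int n} \<inter> {a. f a > int n}))" using sumk by simp
  moreover have "{1..int n} \<inter> {a. f a > int n} = {a \<in> {1..int n}. f a > int n}" by auto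
  ultimately have "int k * int n = int n * int (card {a \<in> {1..int n}. f a > int n})" by simp
  then show ?thesis using n1 by simp
qed

lemma card_J1: "card (J_set n f 1) + 1 = k"
proof -
  have r1: "(1::int) \<in> {1..int n}" using n1 by simp
  have fi: "\<forall>u\<in>{1..int n}. 1 \<le> fbar_inv n f u" using fbar_inv(1) by auto
  have "J_set n f 1 = {u \<in> {1..int n}. u \<le> fbar_inv n f u} - {1}"
    unfolding J_char[OF r1] JC_def IC_def using fi by force
  moreover have "1 \<in> {u \<in> {1..int n}. u \<le> fbar_inv n f u}" using fbar_inv[OF r1] r1 by auto
  moreover have "finite {u \<in> {1..int n}. u \<le> fbar_inv n f u}" by (rule finite_subset[of _ "{1..int n}"]) auto
  ultimately have c: "card (J_set n f 1) + 1 = card {u \<in> {1..int n}. u \<le> fbar_inv n f u}"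
    by (metis card_Suc_Diff1 Suc_eq_plus1)
  have "{u \<in> {1..int n}. u \<le> fbar_inv n f u} = fbar n f ` {a \<in> {1..int n}. f a > int n}"
  proof safe
    fix u assume u: "u \<in> {1..int n}" "u \<le> fbar_inv n f u"
    have "f (fbar_inv n f u) > int n" using fa_facts[OF u(1)] u by (auto split: if_splits)
    then show "u \<in> fbar n f ` {a \<in> {1..int n}. f a > int n}"
      using fbar_inv[OF u(1)] by (metis (mono_tags, lifting) image_eqI mem_Collect_eq)
  next
    fix a assume a: "a \<in> {1..int n}" "f a > int n"
    show "fbar n f a \<in> {1..int n}" by (rule fbar_range)
    have "fbar_inv n f (fbar n f a) = a" using fbar_inv_eq a by simp
    moreover have "fbar n f a \<le> a" using fa_facts[OF fbar_range[of a]] a bnd[of a]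
      by (simp add: calculation)
    ultimately show "fbar n f a \<le> fbar_inv n f (fbar n f a)" by simp
  qed
  moreover have "card (fbar n f ` {a \<in> {1..int n}. f a > int n}) = card {a \<in> {1..int n}. f a > int n}"
    by (rule card_image, rule inj_onI) (use fbar_inj in auto)
  ultimately show ?thesis using c card_big by simp
qed

lemma card_J_step: assumes r: "r \<in> {1..int n}" "r < int n"
  shows "card (J_set n f (r+1)) = card (J_set n f r)"
proof -
  have r1: "r + 1 \<in> {1..int n}" using r by auto
  have fr: "fbar n f r \<in> {1..int n}" by (rule fbar_range)
  have "J_set n f (r+1) = insert (fbar n f r) (J_set n f r) - {r+1}"
  proof -
    have "u \<in> J_set n f (r+1) \<longleftrightarrow> u \<in> insert (fbar n f r) (J_set n f r) - {r+1}" for u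
    proof (cases "u \<in> {1..int n}")
      case True
      have "fbar_inv n f u = r \<longleftrightarrow> u = fbar n f r" using fbar_inv[OF True] fbar_inv_eq[OF r(1)] by auto
      then show ?thesis unfolding J_char[OF r1] J_char[OF r(1)]
        using JC_step[OF fbar_inv(1)[OF True] True r] True by auto
    next
      case False then show ?thesis using fr J_char r r1 by auto
    qed
    then show ?thesis by blast
  qed
  moreover have "fbar n f r \<notin> J_set n f r" unfolding J_char[OF r(1)] using fbar_inv_eq[OF r(1)] JC_self by auto
  moreover have "r + 1 \<in> insert (fbar n f r) (J_set n f r)"
  proof (cases "fbar_inv n f (r+1) = r")
    case True then show ?thesis using fbar_inv[OF r1] by auto
  next
    case False then show ?thesis unfolding J_char[OF r(1)] using JC_step[OF fbar_inv(1)[OF r1] r1 r] r1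
      JC_self by (auto simp: JC_def IC_def)
  qed
  ultimately show ?thesis using finJ by (simp add: card_insert_if)
qed

lemma card_J: assumes "r \<in> {1..int n}" shows "card (J_set n f r) + 1 = k"
proof -
  have "r \<le> int n \<longrightarrow> card (J_set n f r) + 1 = k" if "1 \<le> r" for r
    using that
  proof (induction r rule: int_ge_induct)
    case base then show ?case using card_J1 by simp
  next
    case (step i) then show ?case using card_J_step[of i] by auto
  qed
  then show ?thesis using assms by auto
qed

end


lemma ps: "pos_plus a < pos_minus b \<longleftrightarrow> a < b" "pos_minus a < pos_plus b \<longleftrightarrow> a \<le> b"
  "pos_plus a < pos_plus b \<longleftrightarrow> a < b" "pos_minus a < pos_minus b \<longleftrightarrow> a < b"
  unfolding pos_plus_def pos_minus_def by auto

lemma sbc: "strictly_between x y z \<longleftrightarrow> (x < z \<and> z < y) \<or> (y < z \<and> z < x)"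
  unfolding strictly_between_def by auto

lemma Dlem: fixes a u b v :: int
  assumes "a \<in> {1..n}" "u \<in> {1..n}" "b \<in> {1..n}" "v \<in> {1..n}" "u \<noteq> v" "a \<noteq> b"
    "JC a u b" "JC b v (if b < n then b + 1 else 1)" "JC b v u"
  shows "chords_cross (pos_plus a) (pos_minus u) (pos_plus b) (pos_minus v) \<or>
         ccw_order (pos_plus a) (pos_minus u) (pos_plus b) (pos_minus v) \<or>
         ccw_order (pos_plus b) (pos_minus v) (pos_plus a) (pos_minus u)"
  using assms unfolding JC_def IC_def chords_cross_def sbc ccw_order_def cw_order_def ps
  by (smt (z3))



definition prodl :: "real list \<Rightarrow> real \<Rightarrow> real" where
  "prodl xs t = (\<Prod>x\<leftarrow>xs. sin (t - x))"

lemma sin_ident: fixes p q t c :: real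
  shows "sin (q - p) * sin (t - c) = sin (q - c) * sin (t - p) + sin (c - p) * sin (t - q)"
  unfolding sin_diff cos_diff by algebra

lemma sin_comb: fixes p q c :: real assumes "sin (q - p) \<noteq> 0"
  shows "\<exists>\<alpha> \<beta>. \<forall>t. sin (t - c) = \<alpha> * sin (t - p) + \<beta> * sin (t - q)"
proof (intro exI allI)
  fix t
  have "sin (q - p) * sin (t - c) = sin (q - c) * sin (t - p) + sin (c - p) * sin (t - q)" by (rule sin_ident)
  then show "sin (t - c) = (sin (q - c) / sin (q - p)) * sin (t - p) + (sin (c - p) / sin (q - p)) * sin (t - q)"
    using assms by (simp add: field_simps)
qed

definition hh :: "(nat \<Rightarrow> real) \<Rightarrow> nat \<Rightarrow> nat \<Rightarrow> real \<Rightarrow> real" where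
  "hh s m j t = (\<Prod>i\<in>{1..m} - {j}. sin (t - s i))"

lemma interp:
  assumes "\<forall>i\<in>{1..m}. \<forall>j\<in>{1..m}. i \<noteq> j \<longrightarrow> sin (s i - s j) \<noteq> 0"
    and "length xs + 1 = m"
  shows "\<exists>d. \<forall>t. prodl xs t = (\<Sum>j\<in>{1..m}. d j * hh s m j t)"
  using assms
proof (induction xs arbitrary: m)
  case Nil
  then have "m = 1" by simp
  then show ?case by (intro exI[of _ "\<lambda>_. 1"]) (simp add: prodl_def hh_def)
next
  case (Cons x xs)
  define m' where "m' = m - 1"
  have m: "m = Suc m'" "length xs + 1 = m'" using Cons.prems m'_def by auto
  have dist': "\<forall>i\<in>{1..m'}. \<forall>j\<in>{1..m'}. i \<noteq> j \<longrightarrow> sin (s i - s j) \<noteq> 0"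
    using Cons.prems(1) m by auto
  obtain d' where d': "\<forall>t. prodl xs t = (\<Sum>j\<in>{1..m'}. d' j * hh s m' j t)"
    using Cons.IH[OF dist' m(2)] by blast
  have "\<forall>j\<in>{1..m'}. \<exists>\<alpha> \<beta>. \<forall>t. sin (t - x) = \<alpha> * sin (t - s j) + \<beta> * sin (t - s m)"
  proof
    fix j assume j: "j \<in> {1..m'}"
    have "sin (s m - s j) \<noteq> 0" using Cons.prems(1) j m by auto
    then show "\<exists>\<alpha> \<beta>. \<forall>t. sin (t - x) = \<alpha> * sin (t - s j) + \<beta> * sin (t - s m)" by (rule sin_comb)
  qed
  then obtain \<alpha> \<beta> where ab: "\<forall>j\<in>{1..m'}. \<forall>t. sin (t - x) = \<alpha> j * sin (t - s j) + \<beta> j * sin (t - s m)"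
    by metis
  have h1: "sin (t - s j) * hh s m' j t = hh s m m t" if "j \<in> {1..m'}" for j t
  proof -
    have "{1..m} - {m} = {1..m'}" using that m by auto
    then show ?thesis unfolding hh_def using that by (simp add: prod.remove)
  qed
  have h2: "sin (t - s m) * hh s m' j t = hh s m j t" if "j \<in> {1..m'}" for j t
  proof -
    have "{1..m} - {j} = insert m ({1..m'} - {j})" using that m by auto
    then show ?thesis unfolding hh_def using that m by (simp add: prod.insert)
  qed
  define d where "d j = (if j = m then (\<Sum>j'\<in>{1..m'}. d' j' * \<alpha> j') else d' j * \<beta> j)" for j
  show ?case
  proof (intro exI[of _ d] allI)
    fix t
    have "prodl (x # xs) t = sin (t - x) * prodl xs t" by (simp add: prodl_def)
    also have "\<dots> = (\<Sum>j\<in>{1..m'}. d' j * (sin (t - x) * hh s m' j t))"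
      using d' by (simp add: sum_distrib_left algebra_simps)
    also have "\<dots> = (\<Sum>j\<in>{1..m'}. d' j * \<alpha> j * hh s m m t + d' j * \<beta> j * hh s m j t)"
    proof (rule sum.cong)
      fix j assume j: "j \<in> {1..m'}"
      have "sin (t - x) * hh s m' j t = \<alpha> j * (sin (t - s j) * hh s m' j t) + \<beta> j * (sin (t - s m) * hh s m' j t)"
        using ab j by (simp add: algebra_simps)
      also have "\<dots> = \<alpha> j * hh s m m t + \<beta> j * hh s m j t" using h1 h2 j by simp
      finally show "d' j * (sin (t - x) * hh s m' j t) = d' j * \<alpha> j * hh s m m t + d' j * \<beta> j * hh s m j t"
        by (simp add: algebra_simps)
    qed simp
    also have "\<dots> = d m * hh s m m t + (\<Sum>j\<in>{1..m'}. d j * hh s m j t)"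
      unfolding d_def using m by (auto simp: sum.distrib sum_distrib_right)
    also have "\<dots> = (\<Sum>j\<in>{1..m}. d j * hh s m j t)"
    proof -
      have "{1..m} = insert m {1..m'}" using m by auto
      then show ?thesis using m by simp
    qed
    finally show "prodl (x # xs) t = (\<Sum>j\<in>{1..m}. d j * hh s m j t)" .
  qed
qed

lemma hh_zero: "i \<in> {1..m} \<Longrightarrow> i \<noteq> j \<Longrightarrow> hh s m j (s i) = 0"
  unfolding hh_def by (intro prod_zero) (auto intro!: bexI[of _ i])

lemma hh_nz: assumes "\<forall>i\<in>{1..m}. \<forall>j\<in>{1..m}. i \<noteq> j \<longrightarrow> sin (s i - s j) \<noteq> 0" "j \<in> {1..m}"
  shows "hh s m j (s j) \<noteq> 0"
  unfolding hh_def using assms by (subst prod_zero_iff) auto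

lemma lagrange:
  assumes d: "\<forall>i\<in>{1..m}. \<forall>j\<in>{1..m}. i \<noteq> j \<longrightarrow> sin (s i - s j) \<noteq> 0"
    and "length xs + 1 = m"
  shows "prodl xs t = (\<Sum>j\<in>{1..m}. (prodl xs (s j) / hh s m j (s j)) * hh s m j t)"
proof -
  obtain c where c: "\<forall>t. prodl xs t = (\<Sum>j\<in>{1..m}. c j * hh s m j t)" using interp[OF assms] by blast
  have cj: "c j = prodl xs (s j) / hh s m j (s j)" if j: "j \<in> {1..m}" for j
  proof -
    have "prodl xs (s j) = (\<Sum>i\<in>{1..m}. c i * hh s m i (s j))" using c by simp
    also have "\<dots> = (\<Sum>i\<in>{1..m}. if i = j then c j * hh s m j (s j) else 0)"
    proof (rule sum.cong)
      fix i assume i: "i \<in> {1..m}"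
      show "c i * hh s m i (s j) = (if i = j then c j * hh s m j (s j) else 0)"
        using hh_zero[OF j, of i s] by auto
    qed simp
    also have "\<dots> = c j * hh s m j (s j)" using j by simp
    finally show ?thesis using hh_nz[OF d j] by simp
  qed
  have "prodl xs t = (\<Sum>j\<in>{1..m}. c j * hh s m j t)" using c by blast
  also have "\<dots> = (\<Sum>j\<in>{1..m}. (prodl xs (s j) / hh s m j (s j)) * hh s m j t)"
    by (rule sum.cong) (use cj in auto)
  finally show ?thesis .
qed



definition gA :: "(int \<Rightarrow> real) \<Rightarrow> int set \<Rightarrow> real \<Rightarrow> real" where
  "gA \<theta> A t = (\<Prod>p\<in>A. sin (t - \<theta> p))"

definition PP :: "nat \<Rightarrow> (int \<Rightarrow> real) \<Rightarrow> (nat \<Rightarrow> real) \<Rightarrow> (nat \<Rightarrow> real) \<Rightarrow> int set \<Rightarrow> bool" where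
  "PP k \<theta> s c A \<longleftrightarrow> (\<forall>xs. length xs + card A + 1 = k \<longrightarrow>
      (\<Sum>i\<in>{1..k}. c i * (gA \<theta> A (s i) * prodl xs (s i))) = 0)"

lemma PP_rule:
  assumes fin: "finite C" and uv: "u \<notin> C" "v \<notin> C" and sn: "sin (\<theta> v - \<theta> u) \<noteq> 0"
    and cd: "card C + 2 \<le> k"
    and Pu: "PP k \<theta> s c (insert u C)" and Pv: "PP k \<theta> s c (insert v C)"
  shows "PP k \<theta> s c C"
  unfolding PP_def
proof (intro allI impI)
  fix xs :: "real list" assume len: "length xs + card C + 1 = k"
  then obtain x xs' where xs: "xs = x # xs'" using cd by (cases xs) auto
  obtain \<alpha> \<beta> where ab: "\<forall>t. sin (t - x) = \<alpha> * sin (t - \<theta> u) + \<beta> * sin (t - \<theta> v)"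
    using sin_comb[OF sn] by blast
  have l': "length xs' + card (insert u C) + 1 = k" "length xs' + card (insert v C) + 1 = k"
    using len xs fin uv by auto
  have "(\<Sum>i\<in>{1..k}. c i * (gA \<theta> C (s i) * prodl xs (s i))) =
        \<alpha> * (\<Sum>i\<in>{1..k}. c i * (gA \<theta> (insert u C) (s i) * prodl xs' (s i))) +
        \<beta> * (\<Sum>i\<in>{1..k}. c i * (gA \<theta> (insert v C) (s i) * prodl xs' (s i)))"
    unfolding sum_distrib_left sum.distrib[symmetric]
  proof (rule sum.cong)
    fix i
    show "c i * (gA \<theta> C (s i) * prodl xs (s i)) =
      \<alpha> * (c i * (gA \<theta> (insert u C) (s i) * prodl xs' (s i))) +
      \<beta> * (c i * (gA \<theta> (insert v C) (s i) * prodl xs' (s i)))"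
      using ab[rule_format, of "s i"] fin uv unfolding xs gA_def
      by (simp add: prodl_def algebra_simps)
  qed simp
  also have "\<dots> = 0" using Pu Pv l' unfolding PP_def by simp
  finally show "(\<Sum>i\<in>{1..k}. c i * (gA \<theta> C (s i) * prodl xs (s i))) = 0" .
qed

context bap begin

lemma modn_succ: "modn n (x + 1) = (if modn n x < int n then modn n x + 1 else 1)"
proof -
  obtain l where l: "x = modn n x + l * int n" using modn_eq by blast
  have "modn n (x + 1) = modn n ((modn n x + 1) + l * int n)" using l by (metis add.commute add.left_commute)
  also have "\<dots> = modn n (modn n x + 1)" by (rule modn_plus)
  also have "\<dots> = (if modn n x < int n then modn n x + 1 else 1)"
  proof (cases "modn n x < int n")
    case True then show ?thesis using modn_id modn_range[of x] by auto
  next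
    case False
    then have "modn n x = int n" using modn_range[of x] by auto
    then have "modn n (modn n x + 1) = modn n (1 + 1 * int n)" by (simp add: add.commute)
    also have "\<dots> = modn n 1" by (rule modn_plus)
    also have "\<dots> = 1" using modn_id n1 by auto
    finally show ?thesis using False by simp
  qed
  finally show ?thesis .
qed

lemma modn_add: "modn n (modn n x + y) = modn n (x + y)"
proof -
  obtain l where l: "x = modn n x + l * int n" using modn_eq by blast
  have "modn n (x + y) = modn n ((modn n x + y) + l * int n)" using l by (metis add.commute add.left_commute)
  then show ?thesis using modn_plus by simp
qed

definition L :: "int \<Rightarrow> nat \<Rightarrow> int set" where
  "L j m = {p \<in> {1..int n}. \<forall>i<m. p \<in> J_set n f (modn n (j + int i))}"

lemma J_sub: "J_set n f r \<subseteq> {1..int n}" using I_sub unfolding J_set_def by auto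

lemma L1: "L j 1 = J_set n f (modn n j)" unfolding L_def using J_sub[of "modn n j"] by auto

lemma L_step: assumes m: "m \<ge> 1" shows "L j (Suc m) = L j m \<inter> L (j+1) m"
proof (rule set_eqI)
  fix p
  let ?P = "\<lambda>x. p \<in> J_set n f (modn n x)"
  have "(\<forall>i<Suc m. ?P (j + int i)) \<longleftrightarrow> (\<forall>i<m. ?P (j + int i)) \<and> (\<forall>i<m. ?P (j + 1 + int i))"
  proof safe
    fix i assume "\<forall>i<Suc m. ?P (j + int i)" "i < m"
    then show "?P (j + int i)" "?P (j + 1 + int i)"
      using spec[of _ "Suc i"] by (auto simp: add.assoc)
  next
    fix i assume h: "\<forall>i<m. ?P (j + int i)" "\<forall>i<m. ?P (j + 1 + int i)" "i < Suc m"
    show "?P (j + int i)"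
    proof (cases "i < m")
      case True then show ?thesis using h by auto
    next
      case False
      then have "i = Suc (m - 1)" "m - 1 < m" using h(3) m by auto
      then show ?thesis using h(2) by (metis add.assoc of_nat_Suc add.commute)
    qed
  qed
  then show "p \<in> L j (Suc m) \<longleftrightarrow> p \<in> L j m \<inter> L (j+1) m" unfolding L_def by auto
qed

lemma Jm_char: "p \<in> J_set n f (modn n r) \<longleftrightarrow> p \<in> {1..int n} \<and> JC (fbar_inv n f p) p (modn n r)"
  using J_char[OF modn_range] by auto

end


context bap begin

definition DD :: "int \<Rightarrow> int \<Rightarrow> bool" where
  "DD u v \<longleftrightarrow> chords_cross (pos_plus (fbar_inv n f u)) (pos_minus u) (pos_plus (fbar_inv n f v)) (pos_minus v) \<or>
         ccw_order (pos_plus (fbar_inv n f u)) (pos_minus u) (pos_plus (fbar_inv n f v)) (pos_minus v) \<or>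
         ccw_order (pos_plus (fbar_inv n f v)) (pos_minus v) (pos_plus (fbar_inv n f u)) (pos_minus u)"

lemma succ_mod: "modn n (x + 1) = (if modn n x < int n then modn n x + 1 else 1)" by (rule modn_succ)

lemma comb:
  assumes H0: "\<forall>r\<in>{1..int n}. (\<Sum>i\<in>{1..k}. c i * gA \<theta> (J_set n f r) (s i)) = 0"
    and H\<theta>: "\<forall>u\<in>{1..int n}. \<forall>v\<in>{1..int n}. u \<noteq> v \<longrightarrow> DD u v \<longrightarrow> sin (\<theta> v - \<theta> u) \<noteq> 0"
  shows "PP k \<theta> s c {}"
proof -
  have main: "\<forall>j. PP k \<theta> s c (L j m)" if m1: "1 \<le> m" and mn: "m \<le> n" for m
    using m1 mn
  proof (induction m rule: dec_induct)
    case base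
    show ?case
    proof
      fix j
      have cj: "card (J_set n f (modn n j)) + 1 = k" using card_J[OF modn_range] .
      show "PP k \<theta> s c (L j 1)" unfolding L1 PP_def
      proof (intro allI impI)
        fix xs :: "real list" assume "length xs + card (J_set n f (modn n j)) + 1 = k"
        then have "xs = []" using cj by auto
        then show "(\<Sum>i\<in>{1..k}. c i * (gA \<theta> (J_set n f (modn n j)) (s i) * prodl xs (s i))) = 0"
          using H0 modn_range[of j] by (simp add: prodl_def)
      qed
    qed
  next
    case (step m')
    have IH: "\<And>j. PP k \<theta> s c (L j m')" using step by auto
    have m': "1 \<le> m'" "m' < n" using step by auto
    show ?case
    proof
      fix j
      define A where "A = L j m'"
      define B where "B = L (j+1) m'"
      have LS: "L j (Suc m') = A \<inter> B" unfolding A_def B_def using L_step m' by simp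
      show "PP k \<theta> s c (L j (Suc m'))"
      proof (cases "A \<subseteq> B \<or> B \<subseteq> A")
        case True
        have "PP k \<theta> s c (A \<inter> B)"
          using True
        proof
          assume "A \<subseteq> B" then have "A \<inter> B = A" by auto
          then show ?thesis using IH A_def by simp
        next
          assume "B \<subseteq> A" then have "A \<inter> B = B" by auto
          then show ?thesis using IH B_def by simp
        qed
        then show ?thesis using LS by simp
      next
        case False
        define r where "r = modn n j"
        have r: "r \<in> {1..int n}" using modn_range r_def by simp
        have mj1: "modn n (j + 1) = (if r < int n then r + 1 else 1)" using modn_succ r_def by simp
        have AB: "u = modn n (j + int m')" if u: "u \<in> A" "u \<notin> B" for u
        proof -
          have uA: "\<forall>i<m'. u \<in> J_set n f (modn n (j + int i))" "u \<in> {1..int n}" using u unfolding A_def L_def by auto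
          obtain i where i: "i < m'" "u \<notin> J_set n f (modn n (j + 1 + int i))" using u uA unfolding B_def L_def by auto
          have "i = m' - 1"
          proof (rule ccontr)
            assume "i \<noteq> m' - 1"
            then have "Suc i < m'" using i by auto
            then have "u \<in> J_set n f (modn n (j + int (Suc i)))" using uA by blast
            moreover have "j + int (Suc i) = j + 1 + int i" by simp
            ultimately show False using i(2) by (metis add.assoc)
          qed
          define x where "x = j + int (m' - 1)"
          have "m' - 1 < m'" using m' by simp
          then have e1: "u \<in> J_set n f (modn n x)" using uA(1) unfolding x_def by blast
          have "j + 1 + int i = x + 1" unfolding x_def using \<open>i = m' - 1\<close> by simp
          then have e2: "u \<notin> J_set n f (modn n (x + 1))" using i(2) by metis
          have xm: "x + 1 = j + int m'" unfolding x_def using m' by simp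
          have j1: "JC (fbar_inv n f u) u (modn n x)" using e1 Jm_char by auto
          have j2: "\<not> JC (fbar_inv n f u) u (if modn n x < int n then modn n x + 1 else 1)"
            using e2 Jm_char[of u "x+1"] uA(2) modn_succ[of x] by auto
          have "u = (if modn n x < int n then modn n x + 1 else 1)"
            using N2[OF fbar_inv(1)[OF uA(2)] uA(2) modn_range[of x] j1 j2] .
          then show ?thesis using modn_succ[of x] xm by simp
        qed
        have BA: "fbar_inv n f v = r" "v \<in> J_set n f (modn n (j + 1))" "\<forall>i<m'. v \<in> J_set n f (modn n (j + 1 + int i))"
          "v \<notin> J_set n f r" "v \<in> {1..int n}"
          if v: "v \<in> B" "v \<notin> A" for v
        proof -
          show vB: "\<forall>i<m'. v \<in> J_set n f (modn n (j + 1 + int i))" "v \<in> {1..int n}" using v unfolding B_def L_def by auto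
          obtain i where i: "i < m'" "v \<notin> J_set n f (modn n (j + int i))" using v vB unfolding A_def L_def by auto
          have "i = 0"
          proof (rule ccontr)
            assume "i \<noteq> 0"
            then have "i - 1 < m'" "j + 1 + int (i - 1) = j + int i" using i by auto
            then show False using vB i by metis
          qed
          then show vr: "v \<notin> J_set n f r" using i r_def by simp
          have "0 < m'" using m' by simp
          then have "v \<in> J_set n f (modn n (j + 1 + int 0))" using vB(1) by blast
          then show v1: "v \<in> J_set n f (modn n (j + 1))" by simp
          have n1': "\<not> JC (fbar_inv n f v) v r" using vr J_char[OF r] vB(2) by auto
          have n2': "JC (fbar_inv n f v) v (if r < int n then r + 1 else 1)" using v1 Jm_char[of v "j+1"] mj1 by auto
          show "fbar_inv n f v = r"
            using N3[OF fbar_inv(1)[OF vB(2)] vB(2) r n1' n2'] .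
        qed
        obtain u where u: "u \<in> A" "u \<notin> B" using False by auto
        obtain v where v: "v \<in> B" "v \<notin> A" using False by auto
        have Aeq: "A = insert u (A \<inter> B)" using AB u by blast
        have Beq: "B = insert v (A \<inter> B)"
        proof -
          have "v' = v" if "v' \<in> B" "v' \<notin> A" for v'
            using BA[OF that] BA[OF v] fbar_inv(2) by metis
          then show ?thesis using v by blast
        qed
        have uj: "u = modn n (j + int m')" using AB u by simp
        have un: "u \<in> {1..int n}" using uj modn_range by simp
        have vv: "fbar_inv n f v = r" "v \<in> J_set n f (modn n (j + 1))" "\<forall>i<m'. v \<in> J_set n f (modn n (j + 1 + int i))"
          "v \<notin> J_set n f r" "v \<in> {1..int n}" using BA[OF v] by auto
        have uv: "u \<noteq> v" using u v by auto
        have uJr: "u \<in> J_set n f r" using u m' unfolding A_def L_def r_def by fastforce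
        have vJu: "v \<in> J_set n f u"
        proof -
          have "m' - 1 < m'" using m' by simp
          then have "v \<in> J_set n f (modn n (j + 1 + int (m' - 1)))" using vv(3) by blast
          moreover have "j + 1 + int (m' - 1) = j + int m'" using m' by simp
          ultimately show ?thesis using uj by metis
        qed
        have ab: "fbar_inv n f u \<noteq> fbar_inv n f v" using uv fbar_inv(2)[OF un] fbar_inv(2)[OF vv(5)] by metis
        have "DD u v" unfolding DD_def vv(1)
        proof (rule Dlem[OF fbar_inv(1)[OF un] un r vv(5) uv])
          show "fbar_inv n f u \<noteq> r" using ab vv(1) by simp
          show "JC (fbar_inv n f u) u r" using uJr J_char[OF r] by auto
          show "JC r v (if r < int n then r + 1 else 1)" using vv(2) mj1 Jm_char[of v "j+1"] vv(1) by auto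
          show "JC r v u" using vJu J_char[OF un] vv(1) by auto
        qed
        then have sn: "sin (\<theta> v - \<theta> u) \<noteq> 0" using H\<theta> un vv(5) uv by blast
        have finC: "finite (A \<inter> B)" by (rule finite_subset[of _ "{1..int n}"]) (auto simp: A_def L_def)
        have "A \<subseteq> J_set n f r" unfolding A_def L_def r_def using m' by fastforce
        then have "card A \<le> card (J_set n f r)" using finJ card_mono by blast
        moreover have "card A = card (A \<inter> B) + 1"
        proof -
          have "u \<notin> A \<inter> B" using u by simp
          then have "card (insert u (A \<inter> B)) = Suc (card (A \<inter> B))" using finC by simp
          then show ?thesis using Aeq by simp
        qed
        ultimately have cd: "card (A \<inter> B) + 2 \<le> k" using card_J[OF r] by linarith
        have uC: "u \<notin> A \<inter> B" "v \<notin> A \<inter> B" using u v by auto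
        have PA: "PP k \<theta> s c (insert u (A \<inter> B))" using Aeq IH A_def by metis
        have PB: "PP k \<theta> s c (insert v (A \<inter> B))" using Beq IH B_def by metis
        have "PP k \<theta> s c (A \<inter> B)"
          by (rule PP_rule[OF finC uC sn cd PA PB])
        then show ?thesis using LS by simp
      qed
    qed
  qed
  have "L 1 n = {}"
  proof -
    have "p \<notin> L 1 n" for p
    proof
      assume p: "p \<in> L 1 n"
      then have pn: "p \<in> {1..int n}" unfolding L_def by auto
      then have "nat (p - 1) < n" by auto
      then have "p \<in> J_set n f (modn n (1 + int (nat (p - 1))))" using p unfolding L_def by auto
      moreover have "1 + int (nat (p - 1)) = p" using pn by auto
      ultimately show False using modn_id[OF pn] unfolding J_set_def by auto
    qed
    then show ?thesis by auto
  qed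
  moreover have "PP k \<theta> s c (L 1 n)" using main[of n] n1 by auto
  ultimately show ?thesis by simp
qed

end


interpretation V: vector_space vscale
  by unfold_locales (auto simp: vscale_def fun_eq_iff algebra_simps plus_fun_def)

lemma sum_fun_apply: "finite t \<Longrightarrow> (\<Sum>v\<in>t. F v) r = (\<Sum>v\<in>t. F v r)"
  by (induction t rule: finite_induct) (auto simp: plus_fun_def zero_fun_def)

lemma cc_sym: assumes "a \<noteq> b" "u \<noteq> v"
    "chords_cross (pos_plus a) (pos_minus u) (pos_plus b) (pos_minus v)"
  shows "chords_cross (pos_plus b) (pos_minus v) (pos_plus a) (pos_minus u)"
  using assms unfolding chords_cross_def sbc pos_plus_def pos_minus_def by smt

lemma s_mono: assumes "\<forall>i\<in>{1..<k}. s i < s (Suc i)"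
  shows "1 \<le> i \<Longrightarrow> i < j \<Longrightarrow> j \<le> k \<Longrightarrow> (s i :: real) < s j"
proof (induction j)
  case 0 then show ?case by simp
next
  case (Suc j)
  show ?case
  proof (cases "i = j")
    case True then show ?thesis using assms Suc.prems by auto
  next
    case False
    then have "s i < s j" using Suc by auto
    moreover have "s j < s (Suc j)" using assms Suc.prems False by auto
    ultimately show ?thesis by simp
  qed
qed

lemma s_dist: assumes "0 \<le> s 1" and "\<forall>i\<in>{1..<k}. s i < s (Suc i)" and "s k < pi"
  shows "\<forall>i\<in>{1..k}. \<forall>j\<in>{1..k}. i \<noteq> j \<longrightarrow> sin (s i - s j) \<noteq> 0"
proof -
  have le: "1 \<le> i \<Longrightarrow> i \<le> j \<Longrightarrow> j \<le> k \<Longrightarrow> s i \<le> s j" for i j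
    using s_mono[OF assms(2), of i j] by (cases "i = j") auto
  have pos: "sin (s j - s i) > 0" if "1 \<le> i" "i < j" "j \<le> k" for i j
  proof -
    have "s i < s j" using s_mono[OF assms(2)] that by auto
    moreover have "s 1 \<le> s i" "s j \<le> s k" using le that by auto
    ultimately show ?thesis using assms by (intro sin_gt_zero) auto
  qed
  show ?thesis
  proof (intro ballI impI)
    fix i j :: nat assume ij: "i \<in> {1..k}" "j \<in> {1..k}" "i \<noteq> j"
    show "sin (s i - s j) \<noteq> 0"
    proof (cases "i < j")
      case True
      then have "sin (s j - s i) > 0" using pos ij by auto
      moreover have "sin (s i - s j) = - sin (s j - s i)" by (metis minus_diff_eq sin_minus)
      ultimately show ?thesis by simp
    next
      case False then have "j < i" using ij by auto
      then show ?thesis using pos ij by fastforce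
    qed
  qed
qed

lemma eps_nz: "eps_sign n f r \<noteq> 0" unfolding eps_sign_def by simp

lemma hh_list: "\<exists>xs. length xs + 1 = k \<and> (\<forall>t. prodl xs t = hh s k j t)" if "j \<in> {1..k}"
proof -
  let ?l = "sorted_list_of_set ({1..k} - {j})"
  have "length (map s ?l) + 1 = k" using that by auto
  moreover have "prodl (map s ?l) t = hh s k j t" for t
    unfolding prodl_def hh_def
    by (simp add: prod.distinct_set_conv_list[symmetric] comp_def)
  ultimately show ?thesis by blast
qed

theorem mainTheorem18:
  fixes k n :: nat and f :: "int \<Rightarrow> int" and R :: "int set"
    and \<theta> :: "int \<Rightarrow> real" and s :: "nat \<Rightarrow> real"
  assumes "n \<ge> 1"
    and "bounded_affine_perm k n f"
    and "loopless f"
    and "component_reps n f R"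
    and "\<theta> \<in> Theta_pos n f R"
    and "f_nondegenerate n f \<theta>"
    and "0 \<le> s 1" and "\<forall>i\<in>{1..<k}. s i < s (Suc i)" and "s k < pi"
  shows "inj_on (\<lambda>i. gamma n f \<theta> (s i)) {1..k}
       \<and> \<not> module.dependent vscale ((\<lambda>i. gamma n f \<theta> (s i)) ` {1..k})
       \<and> module.span vscale ((\<lambda>i. gamma n f \<theta> (s i)) ` {1..k})
           = module.span vscale (range (gamma n f \<theta>))
       \<and> vector_space.dim vscale (module.span vscale (range (gamma n f \<theta>))) = k"
proof -
  interpret bap k n f using assms(1-3) by unfold_locales
  define G where "G i = gamma n f \<theta> (s i)" for i
  have adm: "f_admissible n f \<theta>" using assms(5) unfolding Theta_pos_def by auto
  have dist: "\<forall>i\<in>{1..k}. \<forall>j\<in>{1..k}. i \<noteq> j \<longrightarrow> sin (s i - s j) \<noteq> 0"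
    using s_dist[OF assms(7-9)] .
  have H\<theta>: "\<forall>u\<in>{1..int n}. \<forall>v\<in>{1..int n}. u \<noteq> v \<longrightarrow> DD u v \<longrightarrow> sin (\<theta> v - \<theta> u) \<noteq> 0"
  proof (intro ballI impI)
    fix u v assume u: "u \<in> {1..int n}" and v: "v \<in> {1..int n}" and uv: "u \<noteq> v" and D: "DD u v"
    have ab: "fbar_inv n f u \<noteq> fbar_inv n f v" using uv fbar_inv(2)[OF u] fbar_inv(2)[OF v] by metis
    have sm: "sin (\<theta> v - \<theta> u) = - sin (\<theta> u - \<theta> v)" by (metis minus_diff_eq sin_minus)
    show "sin (\<theta> v - \<theta> u) \<noteq> 0"
      using D unfolding DD_def
    proof (elim disjE)
      assume cc: "chords_cross (pos_plus (fbar_inv n f u)) (pos_minus u) (pos_plus (fbar_inv n f v)) (pos_minus v)"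
      show ?thesis
      proof (cases "u < v")
        case True
        then have "f_crossing n f u v" using cc u v uv unfolding f_crossing_def by auto
        then have "\<theta> u < \<theta> v \<and> \<theta> v < \<theta> u + pi" using adm True unfolding f_admissible_def by blast
        then have "sin (\<theta> v - \<theta> u) > 0" by (intro sin_gt_zero) auto
        then show ?thesis by simp
      next
        case False
        then have "v < u" using uv by auto
        moreover have "f_crossing n f v u" using cc_sym[OF ab uv cc] u v uv unfolding f_crossing_def by auto
        ultimately have "\<theta> v < \<theta> u \<and> \<theta> u < \<theta> v + pi" using adm unfolding f_admissible_def by blast
        then have "sin (\<theta> u - \<theta> v) > 0" by (intro sin_gt_zero) auto
        then show ?thesis using sm by simp
      qed
    next
      assume "ccw_order (pos_plus (fbar_inv n f u)) (pos_minus u) (pos_plus (fbar_inv n f v)) (pos_minus v)"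
      then have "Mis_du n f u v" using u v uv unfolding Mis_du_def by auto
      then have "\<not> (\<exists>m::int. \<theta> u - \<theta> v = of_int m * pi)" using assms(6) unfolding f_nondegenerate_def by blast
      then have "sin (\<theta> u - \<theta> v) \<noteq> 0" using sin_zero_iff_int2 by blast
      then show ?thesis using sm by simp
    next
      assume "ccw_order (pos_plus (fbar_inv n f v)) (pos_minus v) (pos_plus (fbar_inv n f u)) (pos_minus u)"
      then have "Mis_du n f v u" using u v uv unfolding Mis_du_def by auto
      then have "\<not> (\<exists>m::int. \<theta> v - \<theta> u = of_int m * pi)" using assms(6) unfolding f_nondegenerate_def by blast
      then show ?thesis using sin_zero_iff_int2 by blast
    qed
  qed
  have Gr: "G i r = eps_sign n f r * gA \<theta> (J_set n f r) (s i)" if "r \<in> {1..int n}" for i r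
    using that unfolding G_def gamma_def gA_def by simp
  have Gout: "G i r = 0" if "r \<notin> {1..int n}" for i r
    using that unfolding G_def gamma_def by (simp del: atLeastAtMost_iff)
  have IND: "\<forall>j\<in>{1..k}. c j = 0" if hc: "\<forall>r\<in>{1..int n}. (\<Sum>i\<in>{1..k}. c i * G i r) = 0" for c
  proof -
    have H0: "\<forall>r\<in>{1..int n}. (\<Sum>i\<in>{1..k}. c i * gA \<theta> (J_set n f r) (s i)) = 0"
    proof
      fix r assume r: "r \<in> {1..int n}"
      have "eps_sign n f r * (\<Sum>i\<in>{1..k}. c i * gA \<theta> (J_set n f r) (s i)) = (\<Sum>i\<in>{1..k}. c i * G i r)"
        using Gr[OF r] by (simp add: sum_distrib_left algebra_simps)
      then show "(\<Sum>i\<in>{1..k}. c i * gA \<theta> (J_set n f r) (s i)) = 0" using hc r eps_nz by simp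
    qed
    have PP0: "PP k \<theta> s c {}" by (rule comb[OF H0 H\<theta>])
    show ?thesis
    proof
      fix j assume j: "j \<in> {1..k}"
      obtain xs where xs: "length xs + 1 = k" "\<forall>t. prodl xs t = hh s k j t" using hh_list[OF j] by blast
      have "(\<Sum>i\<in>{1..k}. c i * (gA \<theta> {} (s i) * prodl xs (s i))) = 0"
        using PP0 xs(1) unfolding PP_def by simp
      then have "(\<Sum>i\<in>{1..k}. c i * hh s k j (s i)) = 0" using xs(2) by (simp add: gA_def)
      moreover have "(\<Sum>i\<in>{1..k}. c i * hh s k j (s i)) = (\<Sum>i\<in>{1..k}. if i = j then c j * hh s k j (s j) else 0)"
      proof (rule sum.cong)
        fix i assume i: "i \<in> {1..k}"
        show "c i * hh s k j (s i) = (if i = j then c j * hh s k j (s j) else 0)"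
          using hh_zero[OF i, of j s] by auto
      qed simp
      ultimately have "c j * hh s k j (s j) = 0" using j by simp
      then show "c j = 0" using hh_nz[OF dist j] by simp
    qed
  qed
  have inj: "inj_on G {1..k}"
  proof (rule inj_onI, rule ccontr)
    fix i j assume i: "i \<in> {1..k}" and j: "j \<in> {1..k}" and eq: "G i = G j" and ne: "i \<noteq> j"
    define c where "c l = (if l = i then 1 else if l = j then -1 else (0::real))" for l
    have "\<forall>r\<in>{1..int n}. (\<Sum>l\<in>{1..k}. c l * G l r) = 0"
    proof
      fix r
      have "(\<Sum>l\<in>{1..k}. c l * G l r) = (\<Sum>l\<in>{1..k}. (if l = i then G i r else 0) + (if l = j then - G j r else 0))"
        by (rule sum.cong) (auto simp: c_def ne)
      also have "\<dots> = G i r - G j r" using i j by (simp add: sum.distrib)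
      finally show "(\<Sum>l\<in>{1..k}. c l * G l r) = 0" using eq by simp
    qed
    then have "c i = 0" using IND i by blast
    then show False unfolding c_def by simp
  qed
  have indep: "\<not> V.dependent (G ` {1..k})"
  proof
    assume "V.dependent (G ` {1..k})"
    then obtain t u where t: "finite t" "t \<subseteq> G ` {1..k}" "(\<Sum>v\<in>t. vscale (u v) v) = 0" "\<exists>v\<in>t. u v \<noteq> 0"
      unfolding V.dependent_explicit by blast
    define T where "T = {i \<in> {1..k}. G i \<in> t}"
    have tT: "t = G ` T" using t(2) unfolding T_def by auto
    have injT: "inj_on G T" using inj unfolding T_def by (rule inj_on_subset) auto
    define c where "c i = (if i \<in> T then u (G i) else 0)" for i
    have "\<forall>r\<in>{1..int n}. (\<Sum>i\<in>{1..k}. c i * G i r) = 0"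
    proof
      fix r
      have "0 = (\<Sum>v\<in>t. vscale (u v) v) r" using t(3) by (simp add: zero_fun_def)
      also have "\<dots> = (\<Sum>v\<in>t. u v * v r)" using t(1) by (simp add: sum_fun_apply vscale_def)
      also have "\<dots> = (\<Sum>i\<in>T. u (G i) * G i r)" unfolding tT using sum.reindex[OF injT] by simp
      also have "\<dots> = (\<Sum>i\<in>{1..k}. c i * G i r)"
        unfolding c_def by (rule sum.mono_neutral_cong_left) (auto simp: T_def)
      finally show "(\<Sum>i\<in>{1..k}. c i * G i r) = 0" by simp
    qed
    then have "\<forall>j\<in>{1..k}. c j = 0" by (rule IND)
    moreover obtain v where "v \<in> t" "u v \<noteq> 0" using t(4) by blast
    ultimately have c0: "\<forall>j\<in>{1..k}. c j = 0" "v \<in> t" "u v \<noteq> 0" by auto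
    from \<open>v \<in> t\<close> obtain i where i: "i \<in> T" "v = G i" unfolding tT by blast
    have ik: "i \<in> {1..k}" using i(1) unfolding T_def by blast
    have "c i = u v" unfolding c_def using i by simp
    moreover have "c i = 0" using c0(1) ik by blast
    ultimately show False using c0(3) by simp
  qed
  have span_eq: "V.span (G ` {1..k}) = V.span (range (gamma n f \<theta>))"
  proof
    show "V.span (G ` {1..k}) \<subseteq> V.span (range (gamma n f \<theta>))"
      by (rule V.span_mono) (auto simp: G_def)
    have "range (gamma n f \<theta>) \<subseteq> V.span (G ` {1..k})"
    proof
      fix g assume "g \<in> range (gamma n f \<theta>)"
      then obtain t where g: "g = gamma n f \<theta> t" by blast
      define Lc where "Lc j = hh s k j t / hh s k j (s j)" for j
      have "g = (\<Sum>j\<in>{1..k}. vscale (Lc j) (G j))"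
      proof (rule ext)
        fix r
        have rhs: "(\<Sum>j\<in>{1..k}. vscale (Lc j) (G j)) r = (\<Sum>j\<in>{1..k}. Lc j * G j r)"
          by (simp add: sum_fun_apply vscale_def)
        show "g r = (\<Sum>j\<in>{1..k}. vscale (Lc j) (G j)) r"
        proof (cases "r \<in> {1..int n}")
          case False
          have "g r = 0" using False unfolding g gamma_def by (simp del: atLeastAtMost_iff)
          moreover have "(\<Sum>j\<in>{1..k}. Lc j * G j r) = 0" using Gout[OF False] by simp
          ultimately show ?thesis using rhs by simp
        next
          case True
          define xs where "xs = map \<theta> (sorted_list_of_set (J_set n f r))"
          have len: "length xs + 1 = k" using card_J[OF True] unfolding xs_def by simp
          have px: "prodl xs x = gA \<theta> (J_set n f r) x" for x
            unfolding xs_def prodl_def gA_def using finJ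
            by (simp add: prod.distinct_set_conv_list[symmetric] comp_def)
          have "gA \<theta> (J_set n f r) t = (\<Sum>j\<in>{1..k}. (gA \<theta> (J_set n f r) (s j) / hh s k j (s j)) * hh s k j t)"
            using lagrange[OF dist len, of t] px by simp
          then have "g r = eps_sign n f r * (\<Sum>j\<in>{1..k}. (gA \<theta> (J_set n f r) (s j) / hh s k j (s j)) * hh s k j t)"
            using True unfolding g gamma_def gA_def by simp
          also have "\<dots> = (\<Sum>j\<in>{1..k}. Lc j * G j r)"
            unfolding sum_distrib_left using Gr[OF True] by (intro sum.cong) (auto simp: Lc_def)
          finally show ?thesis using rhs by simp
        qed
      qed
      also have "\<dots> \<in> V.span (G ` {1..k})"
        by (intro V.span_sum V.span_scale V.span_base) auto
      finally show "g \<in> V.span (G ` {1..k})" .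
    qed
    then have "V.span (range (gamma n f \<theta>)) \<subseteq> V.span (V.span (G ` {1..k}))" by (rule V.span_mono)
    then show "V.span (range (gamma n f \<theta>)) \<subseteq> V.span (G ` {1..k})" by (simp add: V.span_span)
  qed
  have dim: "V.dim (V.span (range (gamma n f \<theta>))) = k"
  proof -
    have "V.dim (V.span (G ` {1..k})) = card (G ` {1..k})"
      using V.dim_span_eq_card_independent indep by blast
    also have "\<dots> = k" using card_image[OF inj] by simp
    finally have X: "V.dim (V.span (G ` {1..k})) = k" .
    show ?thesis using X unfolding span_eq .
  qed
  show ?thesis using inj indep span_eq dim unfolding G_def by simp
qed


end
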